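(* Let $H=(V,E,w)$ be a hypergraph, $f\in\mathbb{R}^n$, and $e\in E$ a hyperedge with $\mathrm{rank}(e)\ge 2$. Then $$\Big(\max_{u\in e}f(u)+\min_{v\in e}f(v)\Big)^2\le\sum_{\{u,v\}\subseteq e,\ u\ne v}\frac{1}{\mathrm{rank}(e)-1}\big(f(u)+f(v)\big)^2,$$ where the sum is over unordered pairs of distinct vertices of $e$. Equality holds if and only if at most one vertex $v\in e$ has $f(v)\ne0$, or $\mathrm{rank}(e)=2$.
   Context: A hypergraph $H=(V,E,w)$ has vertex set $V$ with $|V|=n$, hyperedges $E$ (subsets of $V$) and positive weights; $\mathrm{rank}(e)=|e|$. *)

theory Defs
  imports Main Complex_Main
begin

definition hypergraph :: "'a set \<Rightarrow> 'a set set \<Rightarrow> ('a set \<Rightarrow> real) \<Rightarrow> bool" where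
  "hypergraph V E w \<longleftrightarrow> finite V \<and> (\<forall>e\<in>E. e \<subseteq> V \<and> e \<noteq> {}) \<and> (\<forall>e\<in>E. w e > 0)"

definition rank :: "'a set \<Rightarrow> nat" where
  "rank e = card e"

definition pairs :: "'a set \<Rightarrow> 'a set set" where
  "pairs e = {p. \<exists>u v. u \<in> e \<and> v \<in> e \<and> u \<noteq> v \<and> p = {u, v}}"

end

theory Submission imports Defs begin

lemma pairs_decomp:
  assumes "u0 \<in> e" "v0 \<in> e" "u0 \<noteq> v0"
  shows "pairs e = insert {u0,v0} ((\<lambda>x. {u0,x}) ` (e - {u0,v0}) \<union> (\<lambda>x. {v0,x}) ` (e - {u0,v0}) \<union> pairs (e - {u0,v0}))"
  using assms unfolding pairs_def by auto blast+

lemma pairs_finite: "finite e \<Longrightarrow> finite (pairs e)"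
  by (rule finite_subset[of _ "Pow e"]) (auto simp: pairs_def)

lemma pairs_sum:
  assumes "finite e" "u0 \<in> e" "v0 \<in> e" "u0 \<noteq> v0"
  shows "sum h (pairs e) = h {u0,v0} + (\<Sum>x\<in>e - {u0,v0}. h {u0,x}) + (\<Sum>x\<in>e - {u0,v0}. h {v0,x}) + sum h (pairs (e - {u0,v0}))"
proof -
  let ?R = "e - {u0,v0}"
  have fR: "finite ?R" using assms by simp
  have fP: "finite (pairs ?R)" using pairs_finite fR .
  have i1: "inj_on (\<lambda>x. {u0,x}) ?R" by (auto simp: inj_on_def doubleton_eq_iff)
  have i2: "inj_on (\<lambda>x. {v0,x}) ?R" by (auto simp: inj_on_def doubleton_eq_iff)
  have d1: "(\<lambda>x. {u0,x}) ` ?R \<inter> (\<lambda>x. {v0,x}) ` ?R = {}" using assms by (auto simp: doubleton_eq_iff)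
  have d2: "((\<lambda>x. {u0,x}) ` ?R \<union> (\<lambda>x. {v0,x}) ` ?R) \<inter> pairs ?R = {}" by (auto simp: pairs_def)
  have n: "{u0,v0} \<notin> ((\<lambda>x. {u0,x}) ` ?R \<union> (\<lambda>x. {v0,x}) ` ?R \<union> pairs ?R)"
    using assms by (auto simp: pairs_def doubleton_eq_iff)
  have "sum h (pairs e) = h {u0,v0} + sum h ((\<lambda>x. {u0,x}) ` ?R \<union> (\<lambda>x. {v0,x}) ` ?R \<union> pairs ?R)"
    unfolding pairs_decomp[OF assms(2-4)] using n fR fP by (simp add: sum.insert)
  also have "sum h ((\<lambda>x. {u0,x}) ` ?R \<union> (\<lambda>x. {v0,x}) ` ?R \<union> pairs ?R)
     = sum h ((\<lambda>x. {u0,x}) ` ?R) + sum h ((\<lambda>x. {v0,x}) ` ?R) + sum h (pairs ?R)"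
    using d1 d2 fR fP by (simp add: sum.union_disjoint)
  also have "sum h ((\<lambda>x. {u0,x}) ` ?R) = (\<Sum>x\<in>?R. h {u0,x})" using sum.reindex[OF i1] by simp
  also have "sum h ((\<lambda>x. {v0,x}) ` ?R) = (\<Sum>x\<in>?R. h {v0,x})" using sum.reindex[OF i2] by simp
  finally show ?thesis by (simp add: add.assoc)
qed
lemma g_id: "(M+x)^2 + (m+x)^2 - (M+m)^2 = 2*(2*x^2 + (M-x)*(x-m))" for M x m :: real
 by algebra
lemma g_nonneg: fixes m x M :: real
  assumes "m \<le> x" "x \<le> M" shows "(M+m)^2 \<le> (M+x)^2 + (m+x)^2"
proof -
  have "(M-x)*(x-m) \<ge> 0" using assms by simp
  then show ?thesis using g_id[of M x m] by (smt (verit) zero_le_power2)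
qed
lemma g_zero: fixes m x M :: real
  assumes "m \<le> x" "x \<le> M" "(M+x)^2 + (m+x)^2 = (M+m)^2" shows "x = 0 \<and> (M = 0 \<or> m = 0)"
proof -
  have a: "(M-x)*(x-m) \<ge> 0" using assms by simp
  have "2*x^2 + (M-x)*(x-m) = 0" using g_id[of M x m] assms(3) by simp
  then have "x^2 = 0" "(M-x)*(x-m) = 0" using a by (smt (verit) zero_le_power2)+
  then show ?thesis by simp
qed

theorem lemma7:
  fixes V :: "'a set" and E :: "'a set set" and w :: "'a set \<Rightarrow> real"
    and f :: "'a \<Rightarrow> real" and e :: "'a set"
  assumes "hypergraph V E w" and "e \<in> E" and "rank e \<ge> 2"
  shows "(Max (f ` e) + Min (f ` e))^2
           \<le> (\<Sum>p\<in>pairs e. (1 / (real (rank e) - 1)) * (\<Sum>x\<in>p. f x)^2)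
     \<and> ((Max (f ` e) + Min (f ` e))^2
           = (\<Sum>p\<in>pairs e. (1 / (real (rank e) - 1)) * (\<Sum>x\<in>p. f x)^2)
         \<longleftrightarrow> (card {v\<in>e. f v \<noteq> 0} \<le> 1 \<or> rank e = 2))"
proof -
  have fin: "finite e" using assms(1,2) unfolding hypergraph_def by (meson finite_subset)
  define k where "k = card e"
  have k2: "k \<ge> 2" using assms(3) unfolding k_def rank_def .
  have ne: "e \<noteq> {}" using k2 k_def by auto
  define M where "M = Max (f ` e)"
  define m where "m = Min (f ` e)"
  have bnd: "m \<le> f x \<and> f x \<le> M" if "x \<in> e" for x
    using fin that unfolding M_def m_def by auto
  obtain u0 where u0: "u0 \<in> e" "f u0 = M"
  proof -
    have "M \<in> f ` e" using fin ne unfolding M_def by simp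
    then show ?thesis using that by auto
  qed
  obtain v0 where v0: "v0 \<in> e" "v0 \<noteq> u0" "f v0 = m"
  proof -
    obtain w0 where w0: "w0 \<in> e" "f w0 = m"
    proof -
      have "m \<in> f ` e" using fin ne unfolding m_def by simp
      then show ?thesis using that by auto
    qed
    show ?thesis
    proof (cases "w0 = u0")
      case False then show ?thesis using that w0 by blast
    next
      case True
      have "e - {u0} \<noteq> {}"
      proof
        assume "e - {u0} = {}"
        then have "e \<subseteq> {u0}" by auto
        then have "card e \<le> card {u0}" by (intro card_mono) auto
        then have "card e \<le> 1" by simp
        then show False using k2 k_def by simp
      qed
      then obtain v where v: "v \<in> e" "v \<noteq> u0" by auto
      have "f v = m" using bnd[OF v(1)] True w0 u0 by simp
      then show ?thesis using that v by blast
    qed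
  qed
  define R where "R = e - {u0,v0}"
  have finR: "finite R" using fin R_def by simp
  have cardR: "card R = k - 2" unfolding R_def k_def using fin u0 v0
    by (simp add: card_Diff_subset)
  have kR: "real k - 1 = 1 + real (card R)" using cardR k2 by simp
  define h where "h = (\<lambda>p. (\<Sum>x\<in>p. f x)^2)"
  define c where "c = (M+m)^2"
  define d where "d = (\<lambda>x. (M + f x)^2 + (m + f x)^2 - c)"
  define rest where "rest = sum h (pairs R)"
  have dnn: "d x \<ge> 0" if "x \<in> R" for x
    using g_nonneg[of m "f x" M] bnd[of x] that unfolding d_def c_def R_def by auto
  have restnn: "rest \<ge> 0" unfolding rest_def h_def by (simp add: sum_nonneg)
  have hu: "h {u0,x} = (M + f x)^2" if "x \<in> R" for x using that u0 unfolding h_def R_def by auto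
  have hv: "h {v0,x} = (m + f x)^2" if "x \<in> R" for x using that v0 unfolding h_def R_def by auto
  have huv: "h {u0,v0} = c" using u0 v0 unfolding h_def c_def by simp
  define T where "T = sum h (pairs e)"
  have "T = c + (\<Sum>x\<in>R. (M + f x)^2) + (\<Sum>x\<in>R. (m + f x)^2) + rest"
    unfolding T_def rest_def R_def using pairs_sum[OF fin u0(1) v0(1) v0(2)[symmetric], of h] huv hu hv R_def
    by simp
  also have "\<dots> = c + (\<Sum>x\<in>R. d x + c) + rest"
    unfolding d_def by (simp add: sum.distrib)
  also have "\<dots> = (real k - 1) * c + sum d R + rest"
    using kR by (simp add: sum.distrib algebra_simps)
  finally have Teq: "T = (real k - 1) * c + sum d R + rest" .
  have kpos: "real k - 1 > 0" using k2 by simp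
  have S: "(\<Sum>p\<in>pairs e. (1 / (real (rank e) - 1)) * (\<Sum>x\<in>p. f x)^2) = T / (real k - 1)"
    unfolding T_def h_def k_def rank_def by (simp add: sum_divide_distrib)
  have sdnn: "sum d R \<ge> 0" using dnn by (simp add: sum_nonneg)
  have part1: "c \<le> T / (real k - 1)" using Teq kpos sdnn restnn by (simp add: field_simps)
  have eqiff: "c = T / (real k - 1) \<longleftrightarrow> (\<forall>x\<in>R. d x = 0) \<and> (\<forall>p\<in>pairs R. h p = 0)"
  proof -
    have "c = T / (real k - 1) \<longleftrightarrow> sum d R + rest = 0" using Teq kpos by (auto simp: field_simps)
    also have "\<dots> \<longleftrightarrow> sum d R = 0 \<and> rest = 0" using sdnn restnn by linarith
    also have "\<dots> \<longleftrightarrow> (\<forall>x\<in>R. d x = 0) \<and> (\<forall>p\<in>pairs R. h p = 0)"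
      unfolding rest_def using sum_nonneg_eq_0_iff[OF finR, of d] dnn
        sum_nonneg_eq_0_iff[OF pairs_finite[OF finR], of h]
      by (auto simp: h_def)
    finally show ?thesis .
  qed
  define nz where "nz = {v\<in>e. f v \<noteq> 0}"
  have finnz: "finite nz" using fin nz_def by simp
  have eR: "x \<in> R \<longleftrightarrow> x \<in> e \<and> x \<noteq> u0 \<and> x \<noteq> v0" for x unfolding R_def by auto
  have k2R: "k = 2 \<longleftrightarrow> R = {}" using cardR finR k2 by auto
  have cond: "(\<forall>x\<in>R. d x = 0) \<and> (\<forall>p\<in>pairs R. h p = 0) \<longleftrightarrow> card nz \<le> 1 \<or> k = 2"
  proof
    assume A: "(\<forall>x\<in>R. d x = 0) \<and> (\<forall>p\<in>pairs R. h p = 0)"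
    show "card nz \<le> 1 \<or> k = 2"
    proof (cases "R = {}")
      case True then show ?thesis using k2R by simp
    next
      case False
      then obtain x0 where x0: "x0 \<in> R" by auto
      have z: "f x = 0 \<and> (M = 0 \<or> m = 0)" if "x \<in> R" for x
        using g_zero[of m "f x" M] bnd[of x] A that unfolding d_def c_def R_def by auto
      have "nz \<subseteq> {v0} \<or> nz \<subseteq> {u0}"
        using z[OF x0] z u0 v0 eR unfolding nz_def by auto
      then have "card nz \<le> 1"
        using card_mono[of "{v0}" nz] card_mono[of "{u0}" nz] by auto
      then show ?thesis by simp
    qed
  next
    assume B: "card nz \<le> 1 \<or> k = 2"
    show "(\<forall>x\<in>R. d x = 0) \<and> (\<forall>p\<in>pairs R. h p = 0)"
    proof (cases "k = 2")
      case True then show ?thesis using k2R by (simp add: pairs_def)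
    next
      case False
      then have cn: "card nz \<le> 1" using B by simp
      have two: False if "a \<in> nz" "b \<in> nz" "a \<noteq> b" for a b
      proof -
        have "{a,b} \<subseteq> nz" using that by auto
        then have "card {a,b} \<le> card nz" using finnz card_mono by blast
        then show False using cn that by simp
      qed
      have Mm: "M = 0 \<or> m = 0"
        using two[of u0 v0] u0 v0 unfolding nz_def by auto
      have fx: "f x = 0" if "x \<in> R" for x
      proof (rule ccontr)
        assume fx0: "f x \<noteq> 0"
        have xe: "x \<in> e" "x \<noteq> u0" "x \<noteq> v0" using that eR by auto
        show False
        proof (cases "M = 0")
          case True
          then have "m < 0" using bnd[OF xe(1)] fx0 by linarith
          then show ?thesis using two[of x v0] xe v0 fx0 unfolding nz_def by auto
        next
          case False
          then have "m = 0" using Mm by simp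
          then have "M > 0" using bnd[OF xe(1)] fx0 by linarith
          then show ?thesis using two[of x u0] xe u0 fx0 unfolding nz_def by auto
        qed
      qed
      have "d x = 0" if "x \<in> R" for x
      proof -
        have "d x = M^2 + m^2 - (M+m)^2" unfolding d_def c_def using fx[OF that] by simp
        also have "\<dots> = -2*M*m" by algebra
        finally show ?thesis using Mm by simp
      qed
      moreover have "h p = 0" if "p \<in> pairs R" for p
      proof -
        have "p \<subseteq> R" using that unfolding pairs_def by auto
        then show ?thesis unfolding h_def using fx by (simp add: subset_iff)
      qed
      ultimately show ?thesis by blast
    qed
  qed
  show ?thesis
    unfolding S using part1 eqiff cond
    unfolding c_def M_def m_def nz_def k_def rank_def by simp
qed
end
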